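(* If $f,g\in\mathbb{F}_q[x_1,\dots,x_n]$ are $*$-equivalent polynomials, then $N^*(f)=N^*(g)$.
   Context: $\mathbb{F}_q$ is a finite field with $q$ elements. For $D=(d_1,\dots,d_n)\in\mathbb{Z}_{\ge0}^n$ write $X^D=x_1^{d_1}\cdots x_n^{d_n}$. For a polynomial $f=\sum_{j=1}^k a_jX^{D_j}$ with all $a_j\in\mathbb{F}_q^*$ (a constant term corresponds to $D_j=0$), its augmented degree matrix $\tilde D_f$ is the $(n+1)\times k$ integer matrix whose $j$-th column is $(1,D_j)^T$. Two polynomials $f=\sum_{j=1}^k a_jX^{D_j}$ and $g=\sum_{j=1}^k a_jX^{D'_j}$ in $\mathbb{F}_q[x_1,\dots,x_n]$ are called $*$-equivalent if they have the same coefficient vector $(a_1,\dots,a_k)$ and the congruences $\tilde D_f v^T\equiv0\pmod{q-1}$ and $\tilde D_g v^T\equiv0\pmod{q-1}$ (in unknowns $v=(v_1,\dots,v_k)$ with $0\le v_j\le q-2$) have the same set of solutions. $N^*(f)$ denotes the number of roots of $f$ in $(\mathbb{F}_q^* )^n$. *)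

theory Defs
  imports Main "HOL-Library.FuncSet"
begin

text \<open>A polynomial f = sum_{j<k} a_j X^{D_j} in F[x_0,...,x_{n-1}] is represented by its
  coefficient vector a (indices j < k) and exponent vectors D j (entries D j i for i < n).\<close>

definition poly_eval :: "nat \<Rightarrow> nat \<Rightarrow> (nat \<Rightarrow> 'a::field) \<Rightarrow> (nat \<Rightarrow> nat \<Rightarrow> nat) \<Rightarrow> (nat \<Rightarrow> 'a) \<Rightarrow> 'a" where
  "poly_eval n k a D x = (\<Sum>j<k. a j * (\<Prod>i<n. x i ^ D j i))"

definition Nstar :: "nat \<Rightarrow> nat \<Rightarrow> (nat \<Rightarrow> 'a::{field,finite}) \<Rightarrow> (nat \<Rightarrow> nat \<Rightarrow> nat) \<Rightarrow> nat" where
  "Nstar n k a D = card {x \<in> PiE {..<n} (\<lambda>_. UNIV - {0}). poly_eval n k a D x = 0}"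

definition aug_deg :: "(nat \<Rightarrow> nat \<Rightarrow> nat) \<Rightarrow> nat \<Rightarrow> nat \<Rightarrow> nat" where
  "aug_deg D r j = (if r = 0 then 1 else D j (r - 1))"

definition cong_solutions :: "nat \<Rightarrow> nat \<Rightarrow> nat \<Rightarrow> (nat \<Rightarrow> nat \<Rightarrow> nat) \<Rightarrow> (nat \<Rightarrow> nat) set" where
  "cong_solutions q n k D =
     {v \<in> PiE {..<k} (\<lambda>_. {0..q-2}).
        \<forall>r\<le>n. (\<Sum>j<k. aug_deg D r j * v j) mod (q - 1) = 0}"

definition star_equiv :: "nat \<Rightarrow> nat \<Rightarrow> (nat \<Rightarrow> 'a::{field,finite}) \<Rightarrow> (nat \<Rightarrow> nat \<Rightarrow> nat) \<Rightarrow> (nat \<Rightarrow> nat \<Rightarrow> nat) \<Rightarrow> bool" where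
  "star_equiv n k a D D' \<longleftrightarrow>
     (\<forall>j<k. a j \<noteq> 0) \<and>
     cong_solutions (card (UNIV :: 'a set)) n k D = cong_solutions (card (UNIV :: 'a set)) n k D'"

end

theory Submission
  imports Defs "HOL-Algebra.Multiplicative_Group" "HOL-Algebra.Algebraic_Closure_Type"
begin


abbreviation RR where "RR \<equiv> ring_of_type_algebra"

lemma field_RR: "field (RR :: 'a::field ring)" by (rule field_from_type_algebra)

lemma pow_RR: "x [^]\<^bsub>RR\<^esub> (i::nat) = (x::'a::field) ^ i"
  by (induction i) (auto simp: ring_of_type_algebra_def)

lemma gen_exists: "\<exists>g::'a::{field,finite}. g \<noteq> 0 \<and> (\<forall>x. x \<noteq> 0 \<longrightarrow> (\<exists>i. x = g ^ i))"
proof -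
  have fR: "field (RR :: 'a ring)" by (rule field_RR)
  have fin: "finite (carrier (RR :: 'a ring))" by simp
  obtain a where a: "a \<in> carrier (Multiplicative_Group.mult_of (RR::'a ring))"
    "carrier (Multiplicative_Group.mult_of (RR :: 'a ring)) = {a[^]\<^bsub>RR\<^esub>i | i::nat . i \<in> UNIV}"
    using field.finite_field_mult_group_has_gen[OF fR fin] by blast
  have "a \<noteq> 0" using a(1) by (simp add: ring_of_type_algebra_def)
  moreover have "\<exists>i. x = a ^ i" if "x \<noteq> 0" for x
  proof -
    have "x \<in> carrier (Multiplicative_Group.mult_of (RR :: 'a ring))" using that by (simp add: ring_of_type_algebra_def)
    then obtain i::nat where "x = a[^]\<^bsub>RR\<^esub>i" using a(2) by blast
    thus ?thesis unfolding pow_RR by blast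
  qed
  ultimately show ?thesis by blast
qed

lemma fermat_field: "(x::'a::{field,finite}) \<noteq> 0 \<Longrightarrow> x ^ (card (UNIV::'a set) - 1) = 1"
proof -
  assume x: "x \<noteq> 0"
  let ?F = "UNIV - {0::'a}"
  have "(\<Prod>z\<in>?F. x * z) = (\<Prod>z\<in>?F. z)"
  proof (rule prod.reindex_bij_betw)
    show "bij_betw ((*) x) ?F ?F"
      by (rule bij_betw_byWitness[where f'="\<lambda>z. z / x"]) (use x in auto)
  qed
  hence "x ^ card ?F * (\<Prod>z\<in>?F. z) = 1 * (\<Prod>z\<in>?F. z)" by (simp add: prod.distrib)
  moreover have "(\<Prod>z\<in>?F. z) \<noteq> 0" by (simp add: prod_zero_iff)
  ultimately have "x ^ card ?F = 1" by (metis mult_cancel_right)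
  moreover have "card ?F = card (UNIV::'a set) - 1" by (simp add: card_Diff_singleton)
  ultimately show ?thesis by simp
qed


definition ip :: "nat \<Rightarrow> (nat \<Rightarrow> int) \<Rightarrow> (nat \<Rightarrow> int) \<Rightarrow> int" where
  "ip k u v = (\<Sum>j<k. u j * v j)"

definition closedL :: "(nat \<Rightarrow> int) set \<Rightarrow> bool" where
  "closedL L \<longleftrightarrow> (\<lambda>_. 0) \<in> L \<and> (\<forall>u\<in>L. \<forall>w\<in>L. (\<lambda>j. u j + w j) \<in> L) \<and> (\<forall>u\<in>L. \<forall>c. (\<lambda>j. c * u j) \<in> L)"

definition delta :: "nat \<Rightarrow> nat \<Rightarrow> int" where
  "delta j i = (if i = j then 1 else 0)"

lemma closedL_lin: "closedL L \<Longrightarrow> u \<in> L \<Longrightarrow> w \<in> L \<Longrightarrow> (\<lambda>j. u j + c * w j) \<in> L"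
  unfolding closedL_def by metis

lemma ip_lin: "ip k (\<lambda>j. a j + c * b j) v = ip k a v + c * ip k b v"
  unfolding ip_def by (simp add: algebra_simps sum.distrib sum_distrib_left)

lemma ip_Suc: "ip (Suc k) u v = ip k u v + u k * v k"
  unfolding ip_def by simp

lemma ip_cong: "(\<And>j. j < k \<Longrightarrow> v j = v' j) \<Longrightarrow> ip k u v = ip k u v'"
  unfolding ip_def by (rule sum.cong) auto

lemma ip_cong1: "(\<And>j. j < k \<Longrightarrow> u j = u' j) \<Longrightarrow> ip k u v = ip k u' v"
  unfolding ip_def by (rule sum.cong) auto

lemma lattice:
  fixes m :: int
  assumes "m > 0"
  shows "\<forall>L e. closedL L \<longrightarrow> (\<forall>j<k. (\<lambda>i. m * delta j i) \<in> L) \<longrightarrow>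
     (\<forall>v. (\<forall>l\<in>L. m dvd ip k l v) \<longrightarrow> m dvd ip k e v) \<longrightarrow> (\<exists>l\<in>L. \<forall>j<k. m dvd (l j - e j))"
proof (induction k)
  case 0
  then show ?case unfolding closedL_def by auto
next
  case (Suc k)
  show ?case
  proof (intro allI impI)
    fix L and e :: "nat \<Rightarrow> int"
    assume cl: "closedL L" and md: "\<forall>j<Suc k. (\<lambda>i. m * delta j i) \<in> L"
      and hyp: "\<forall>v. (\<forall>l\<in>L. m dvd ip (Suc k) l v) \<longrightarrow> m dvd ip (Suc k) e v"
    define A where "A = {x::nat. x > 0 \<and> (\<exists>l\<in>L. l k = int x)}"
    have mk: "(\<lambda>i. m * delta k i) \<in> L" using md by auto
    have mA: "nat m \<in> A" unfolding A_def using mk assms by (auto simp: delta_def intro!: bexI[OF _ mk])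
    define dn where "dn = (LEAST x. x \<in> A)"
    have dA: "dn \<in> A"
      unfolding dn_def by (rule LeastI) (rule mA)
    define d where "d = int dn"
    obtain ls where ls: "ls \<in> L" "ls k = d" and dpos: "d > 0" using dA unfolding A_def d_def by auto
    have dall: "d dvd l k" if l: "l \<in> L" for l
    proof (rule ccontr)
      assume nd: "\<not> d dvd l k"
      define r where "r = l k mod d"
      have rpos: "r > 0" using nd dpos unfolding r_def
        by (metis dvd_eq_mod_eq_0 le_less pos_mod_sign)
      have rlt: "r < d" unfolding r_def using dpos by simp
      have "(\<lambda>j. l j + (- (l k div d)) * ls j) \<in> L" by (rule closedL_lin[OF cl l ls(1)])
      moreover have "l k + (- (l k div d)) * ls k = r"
        unfolding r_def ls(2) by (simp add: minus_div_mult_eq_mod[symmetric] algebra_simps)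
      ultimately have "nat r \<in> A" unfolding A_def using rpos by (intro CollectI conjI bexI[where x="(\<lambda>j. l j + (- (l k div d)) * ls j)"]) auto
      hence "dn \<le> nat r" unfolding dn_def by (rule Least_le)
      thus False using rlt d_def rpos by linarith
    qed
    have ddm: "d dvd m" using dall[OF mk] by (simp add: delta_def)
    define mq where "mq = m div d"
    have mqd: "m = d * mq" unfolding mq_def using ddm by simp
    have mqpos: "mq > 0" using mqd assms dpos by (simp add: zero_less_mult_iff)
    define v1 where "v1 = (\<lambda>j. if j = k then mq else (0::int))"
    have ipv1: "ip (Suc k) u v1 = u k * mq" for u
    proof -
      have "ip k u v1 = 0" unfolding ip_def v1_def by (intro sum.neutral) auto
      thus ?thesis by (simp add: ip_Suc v1_def)
    qed
    have "m dvd ip (Suc k) e v1"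
    proof (rule mp[OF spec[OF hyp]], rule ballI)
      fix l assume "l \<in> L"
      then obtain s where "l k = d * s" using dall by blast
      thus "m dvd ip (Suc k) l v1" by (simp add: ipv1 mqd)
    qed
    hence "d * mq dvd e k * mq" by (simp add: ipv1 mqd)
    hence dek: "d dvd e k" using mqpos by simp
    define s where "s = e k div d"
    have eks: "e k = d * s" unfolding s_def using dek by simp
    define w where "w = (\<lambda>j. e j + (- s) * ls j)"
    have wk: "w k = 0" unfolding w_def using eks ls(2) by simp
    define L0 where "L0 = {l \<in> L. l k = 0}"
    have cl0: "closedL L0" using cl unfolding closedL_def L0_def by auto
    have md0: "\<forall>j<k. (\<lambda>i. m * delta j i) \<in> L0" using md unfolding L0_def by (auto simp: delta_def)
    have hyp0: "\<forall>u. (\<forall>l\<in>L0. m dvd ip k l u) \<longrightarrow> m dvd ip k w u"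
    proof (intro allI impI)
      fix u assume uh: "\<forall>l\<in>L0. m dvd ip k l u"
      define \<alpha> where "\<alpha> = ip k ls u"
      define l1 where "l1 = (\<lambda>j. (mq * ls j) + (-1) * (m * delta k j))"
      have "(\<lambda>j. mq * ls j) \<in> L" using cl ls(1) unfolding closedL_def by blast
      hence "l1 \<in> L" unfolding l1_def by (rule closedL_lin[OF cl _ mk])
      moreover have "l1 k = 0" unfolding l1_def using ls(2) mqd by (simp add: delta_def)
      ultimately have "l1 \<in> L0" unfolding L0_def by simp
      hence "m dvd ip k l1 u" using uh by blast
      moreover have "ip k l1 u = mq * \<alpha>"
      proof -
        have "ip k l1 u = ip k (\<lambda>j. mq * ls j) u"
          unfolding l1_def by (rule ip_cong1) (simp add: delta_def)
        also have "\<dots> = mq * \<alpha>" unfolding \<alpha>_def ip_def by (simp add: sum_distrib_left algebra_simps)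
        finally show ?thesis .
      qed
      ultimately have "d * mq dvd \<alpha> * mq" by (simp add: mqd mult.commute)
      hence da: "d dvd \<alpha>" using mqpos by simp
      define c where "c = - (\<alpha> div d)"
      have dc: "d * c = - \<alpha>" unfolding c_def using da by simp
      define v where "v = (\<lambda>j. if j = k then c else u j)"
      have ipv: "ip (Suc k) l v = ip k l u + l k * c" for l
        unfolding ip_Suc v_def by (simp add: ip_cong[of k "(\<lambda>j. if j = k then c else u j)" u])
      have "m dvd ip (Suc k) e v"
      proof (rule mp[OF spec[OF hyp]], rule ballI)
        fix l assume l: "l \<in> L"
        then obtain s' where s': "l k = d * s'" using dall by blast
        have "(\<lambda>j. l j + (- s') * ls j) \<in> L" by (rule closedL_lin[OF cl l ls(1)])
        moreover have "l k + (- s') * ls k = 0" using s' ls(2) by simp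
        ultimately have "(\<lambda>j. l j + (- s') * ls j) \<in> L0" unfolding L0_def by simp
        hence "m dvd ip k (\<lambda>j. l j + (- s') * ls j) u" using uh by blast
        hence "m dvd ip k l u - s' * \<alpha>" using ip_lin[of k l "- s'" ls u] by (simp add: \<alpha>_def)
        moreover have "ip (Suc k) l v = ip k l u - s' * \<alpha>"
        proof -
          have "ip (Suc k) l v = ip k l u + s' * (d * c)" using ipv[of l] s' by (simp add: algebra_simps)
          thus ?thesis using dc by simp
        qed
        ultimately show "m dvd ip (Suc k) l v" by simp
      qed
      moreover have "ip (Suc k) w v = ip (Suc k) e v - s * ip (Suc k) ls v"
        unfolding w_def using ip_lin[of "Suc k" e "- s" ls v] by simp
      moreover have "ip (Suc k) ls v = 0" using ipv[of ls] ls(2) dc \<alpha>_def by simp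
      moreover have "ip (Suc k) w v = ip k w u" using ipv[of w] wk by simp
      ultimately show "m dvd ip k w u" by simp
    qed
    obtain l0 where l0: "l0 \<in> L0" "\<forall>j<k. m dvd (l0 j - w j)"
      using Suc.IH cl0 md0 hyp0 by blast
    define l where "l = (\<lambda>j. l0 j + s * ls j)"
    have "l \<in> L" unfolding l_def using l0(1) ls(1) cl L0_def by (auto intro: closedL_lin)
    moreover have "\<forall>j<Suc k. m dvd (l j - e j)"
    proof (intro allI impI)
      fix j assume j: "j < Suc k"
      show "m dvd (l j - e j)"
      proof (cases "j = k")
        case True
        then show ?thesis using l0(1) eks ls(2) unfolding l_def L0_def by simp
      next
        case False
        hence "j < k" using j by simp
        hence "m dvd (l0 j - w j)" using l0(2) by blast
        moreover have "l j - e j = l0 j - w j" unfolding l_def w_def by simp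
        ultimately show ?thesis by simp
      qed
    qed
    ultimately show "\<exists>l\<in>L. \<forall>j<Suc k. m dvd (l j - e j)" by blast
  qed
qed


lemma sum_atMost_split0: "(\<Sum>r\<le>n. f r) = f 0 + (\<Sum>i<n. f (Suc i)) " for f :: "nat \<Rightarrow> 'b::comm_monoid_add"
  by (cases n) (simp, simp only: sum.atMost_Suc_shift lessThan_Suc_atMost)

lemma fiber_count:
  assumes fin: "finite P" and c: "\<And>y. y \<in> \<phi> ` P \<Longrightarrow> card {p\<in>P. \<phi> p = y} = c"
  shows "card {p\<in>P. \<phi> p \<in> Z} = card (\<phi> ` P \<inter> Z) * c"
proof -
  have eq: "{p\<in>P. \<phi> p \<in> Z} = (\<Union>y\<in>\<phi> ` P \<inter> Z. {p\<in>P. \<phi> p = y})" by auto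
  have "card (\<Union>y\<in>\<phi> ` P \<inter> Z. {p\<in>P. \<phi> p = y}) = (\<Sum>y\<in>\<phi> ` P \<inter> Z. card {p\<in>P. \<phi> p = y})"
    by (rule card_UN_disjoint) (use fin in auto)
  also have "\<dots> = (\<Sum>y\<in>\<phi> ` P \<inter> Z. c)" by (rule sum.cong) (auto simp: c)
  finally show ?thesis using eq by simp
qed

lemma pow_mod_eq:
  fixes g :: "'a::{field,finite}"
  assumes "g \<noteq> 0" "a mod (card (UNIV::'a set) - 1) = b mod (card (UNIV::'a set) - 1)"
  shows "g ^ a = g ^ b"
proof -
  let ?m = "card (UNIV::'a set) - 1"
  have gm: "g ^ ?m = 1" using fermat_field assms(1) by blast
  have "g ^ a = g ^ (?m * (a div ?m) + a mod ?m)" by (simp only: mult_div_mod_eq)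
  also have "\<dots> = g ^ (a mod ?m)" unfolding power_add power_mult gm by simp
  also have "\<dots> = g ^ (?m * (b div ?m) + b mod ?m)" using assms(2) unfolding power_add power_mult gm by simp
  also have "\<dots> = g ^ b" by (simp only: mult_div_mod_eq)
  finally show ?thesis .
qed

lemma pow_dvd_one:
  fixes z :: "'a::{field,finite}"
  assumes "z \<noteq> 0" "E mod (card (UNIV::'a set) - 1) = 0"
  shows "z ^ E = 1"
  using pow_mod_eq[OF assms(1), of E 0] assms(2) by simp

lemma card_ge2: "card (UNIV::'a::{field,finite} set) \<ge> 2"
proof -
  have "{0, 1::'a} \<subseteq> UNIV" by simp
  hence "card {0, 1::'a} \<le> card (UNIV :: 'a set)" by (intro card_mono) auto
  thus ?thesis by simp
qed

lemma card_Fs: "card (UNIV - {0::'a::{field,finite}}) = card (UNIV::'a set) - 1"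
  by (simp add: card_Diff_singleton)

lemma gen_order:
  fixes g :: "'a::{field,finite}"
  assumes g: "g \<noteq> 0" "\<forall>x. x \<noteq> 0 \<longrightarrow> (\<exists>i. x = g ^ i)" and N: "g ^ N = 1"
  shows "(card (UNIV::'a set) - 1) dvd N"
proof (rule ccontr)
  let ?m = "card (UNIV::'a set) - 1"
  assume nd: "\<not> ?m dvd N"
  define r where "r = N mod ?m"
  have mpos: "?m > 0" using card_ge2[where 'a='a] by linarith
  have rpos: "r > 0" using nd unfolding r_def by (simp add: dvd_eq_mod_eq_0)
  have rlt: "r < ?m" unfolding r_def using mpos by simp
  have gr: "g ^ r = 1" using pow_mod_eq[OF g(1), of N r] N unfolding r_def by simp
  have "UNIV - {0::'a} \<subseteq> (\<lambda>i. g ^ i) ` {..<r}"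
  proof
    fix x assume "x \<in> UNIV - {0::'a}"
    then obtain i where i: "x = g ^ i" using g(2) by blast
    have "g ^ i = g ^ (r * (i div r) + i mod r)" by (simp only: mult_div_mod_eq)
    also have "\<dots> = g ^ (i mod r)" unfolding power_add power_mult gr by simp
    finally show "x \<in> (\<lambda>i. g ^ i) ` {..<r}" using i rpos by auto
  qed
  hence "card (UNIV - {0::'a}) \<le> card ((\<lambda>i. g ^ i) ` {..<r})" by (intro card_mono) auto
  also have "\<dots> \<le> r" using card_image_le[of "{..<r}" "\<lambda>i. g ^ i"] by simp
  finally show False using rlt card_Fs[where 'a='a] by simp
qed



definition PP :: "nat \<Rightarrow> ('a::{field,finite} \<times> (nat \<Rightarrow> 'a)) set" where
  "PP n = (UNIV - {0}) \<times> PiE {..<n} (\<lambda>_. UNIV - {0})"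

definition phi :: "nat \<Rightarrow> nat \<Rightarrow> (nat \<Rightarrow> nat \<Rightarrow> nat) \<Rightarrow> ('a::field \<times> (nat \<Rightarrow> 'a)) \<Rightarrow> (nat \<Rightarrow> 'a)" where
  "phi n k D p = (\<lambda>j\<in>{..<k}. fst p * (\<Prod>i<n. snd p i ^ D j i))"

lemma dual_sub:
  fixes t :: "'a::{field,finite}"
  assumes t: "t \<noteq> 0" and x: "x \<in> PiE {..<n} (\<lambda>_. UNIV - {0})"
    and v: "v \<in> cong_solutions (card (UNIV::'a set)) n k D"
  shows "(\<Prod>j<k. phi n k D (t, x) j ^ v j) = 1"
proof -
  let ?m = "card (UNIV::'a set) - 1"
  have cv: "\<forall>r\<le>n. (\<Sum>j<k. aug_deg D r j * v j) mod ?m = 0"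
    using v unfolding cong_solutions_def by auto
  have xi: "x i \<noteq> 0" if "i < n" for i using x that by (auto simp: PiE_iff)
  have "(\<Prod>j<k. phi n k D (t, x) j ^ v j) = (\<Prod>j<k. (t * (\<Prod>i<n. x i ^ D j i)) ^ v j)"
    unfolding phi_def by (rule prod.cong) auto
  also have "\<dots> = (\<Prod>j<k. t ^ v j) * (\<Prod>j<k. (\<Prod>i<n. x i ^ D j i) ^ v j)"
    by (simp add: power_mult_distrib prod.distrib)
  also have "(\<Prod>j<k. t ^ v j) = t ^ (\<Sum>j<k. v j)" by (simp add: power_sum)
  also have "\<dots> = 1"
  proof (rule pow_dvd_one[OF t])
    show "(\<Sum>j<k. v j) mod ?m = 0" using cv[rule_format, of 0] by (simp add: aug_deg_def)
  qed
  also have "(\<Prod>j<k. (\<Prod>i<n. x i ^ D j i) ^ v j) = (\<Prod>j<k. \<Prod>i<n. x i ^ (D j i * v j))"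
    by (simp add: prod_power_distrib power_mult)
  also have "\<dots> = (\<Prod>i<n. \<Prod>j<k. x i ^ (D j i * v j))" by (rule prod.swap)
  also have "\<dots> = (\<Prod>i<n. x i ^ (\<Sum>j<k. D j i * v j))" by (simp add: power_sum)
  also have "\<dots> = (\<Prod>i<n. 1)"
  proof (rule prod.cong[OF refl])
    fix i assume i: "i \<in> {..<n}"
    show "x i ^ (\<Sum>j<k. D j i * v j) = 1"
    proof (rule pow_dvd_one[OF xi])
      show "i < n" using i by simp
      show "(\<Sum>j<k. D j i * v j) mod ?m = 0" using cv[rule_format, of "Suc i"] i by (simp add: aug_deg_def)
    qed
  qed
  finally show ?thesis by simp
qed

lemma dual_sup:
  fixes y :: "nat \<Rightarrow> 'a::{field,finite}"
  assumes y: "y \<in> PiE {..<k} (\<lambda>_. UNIV - {0})"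
    and hy: "\<forall>v\<in>cong_solutions (card (UNIV::'a set)) n k D. (\<Prod>j<k. y j ^ v j) = 1"
  shows "y \<in> phi n k D ` PP n"
proof -
  let ?q = "card (UNIV::'a set)"
  let ?m = "?q - 1"
  define mm where "mm = int ?m"
  have mpos: "?m > 0" using card_ge2[where 'a='a] by linarith
  have mmpos: "mm > 0" unfolding mm_def using mpos by simp
  obtain g :: 'a where g: "g \<noteq> 0" "\<forall>x. x \<noteq> 0 \<longrightarrow> (\<exists>i. x = g ^ i)" using gen_exists by blast
  define e where "e j = (SOME i. y j = g ^ i)" for j
  have ye: "y j = g ^ e j" if "j < k" for j
  proof -
    have "y j \<noteq> 0" using y that by (auto simp: PiE_iff)
    hence "\<exists>i. y j = g ^ i" using g(2) by blast
    thus ?thesis unfolding e_def by (rule someI_ex)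
  qed
  define R where "R r j = int (aug_deg D r j)" for r j
  define L where "L = {l. \<exists>c z. \<forall>j. l j = (\<Sum>r\<le>n. c r * R r j) + mm * z j}"
  have clL: "closedL L"
    unfolding closedL_def
  proof (intro conjI ballI allI)
    show "(\<lambda>_. 0) \<in> L" unfolding L_def by (auto intro!: exI[of _ "\<lambda>_. 0"])
  next
    fix u w assume "u \<in> L" "w \<in> L"
    then obtain c z c' z' where cz: "\<forall>j. u j = (\<Sum>r\<le>n. c r * R r j) + mm * z j"
      "\<forall>j. w j = (\<Sum>r\<le>n. c' r * R r j) + mm * z' j" unfolding L_def by blast
    show "(\<lambda>j. u j + w j) \<in> L" unfolding L_def
      by (rule CollectI, rule exI[of _ "\<lambda>r. c r + c' r"], rule exI[of _ "\<lambda>j. z j + z' j"])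
        (simp add: cz algebra_simps sum.distrib)
  next
    fix u c0 assume "u \<in> L"
    then obtain c z where cz: "\<forall>j. u j = (\<Sum>r\<le>n. c r * R r j) + mm * z j" unfolding L_def by blast
    show "(\<lambda>j. c0 * u j) \<in> L" unfolding L_def
      by (rule CollectI, rule exI[of _ "\<lambda>r. c0 * c r"], rule exI[of _ "\<lambda>j. c0 * z j"])
        (simp add: cz algebra_simps sum_distrib_left)
  qed
  have mdL: "\<forall>j<k. (\<lambda>i. mm * delta j i) \<in> L"
  proof (intro allI impI)
    fix j assume "j < k"
    show "(\<lambda>i. mm * delta j i) \<in> L" unfolding L_def
      by (rule CollectI, rule exI[of _ "\<lambda>_. 0"], rule exI[of _ "delta j"]) simp
  qed
  have rowL: "R r \<in> L" if "r \<le> n" for r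
    unfolding L_def
  proof (rule CollectI, rule exI[of _ "\<lambda>r'. if r' = r then 1 else 0"], rule exI[of _ "\<lambda>_. 0"], rule allI)
    fix j
    have "(\<Sum>r'\<le>n. (if r' = r then 1 else 0) * R r' j) = R r j"
    proof -
      have "(\<Sum>r'\<le>n. (if r' = r then 1 else 0) * R r' j) = (\<Sum>r'\<le>n. if r' = r then R r j else 0)"
        by (rule sum.cong) auto
      also have "\<dots> = R r j" using that by (simp add: sum.delta')
      finally show ?thesis .
    qed
    thus "R r j = (\<Sum>r'\<le>n. (if r' = r then 1 else 0) * R r' j) + mm * 0" by simp
  qed
  define e' where "e' j = int (e j)" for j
  have hypL: "\<forall>v. (\<forall>l\<in>L. mm dvd ip k l v) \<longrightarrow> mm dvd ip k e' v"
  proof (intro allI impI)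
    fix v assume hv: "\<forall>l\<in>L. mm dvd ip k l v"
    define v' where "v' j = (if j < k then nat (v j mod mm) else undefined)" for j
    have v'int: "int (v' j) = v j mod mm" if "j < k" for j
      unfolding v'_def using that mmpos by simp
    have dvd_red: "mm dvd (\<Sum>j<k. f j * int (v' j)) - ip k f v" for f
    proof -
      have "(\<Sum>j<k. f j * int (v' j)) - ip k f v = (\<Sum>j<k. f j * (v j mod mm - v j))"
        unfolding ip_def by (simp add: v'int sum_subtractf algebra_simps)
      also have "mm dvd \<dots>"
        by (rule dvd_sum) (simp add: mod_eq_dvd_iff[symmetric])
      finally show ?thesis .
    qed
    have "v' \<in> cong_solutions ?q n k D"
      unfolding cong_solutions_def
    proof (intro CollectI conjI allI impI)
      show "v' \<in> PiE {..<k} (\<lambda>_. {0..?q-2})"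
      proof (rule PiE_I)
        fix j assume "j \<in> {..<k}"
        hence "int (v' j) < mm" using v'int[of j] mmpos by simp
        thus "v' j \<in> {0..?q-2}" unfolding mm_def by simp
      next
        fix j assume "j \<notin> {..<k}" thus "v' j = undefined" unfolding v'_def by simp
      qed
    next
      fix r assume r: "r \<le> n"
      have "mm dvd ip k (R r) v" using hv rowL[OF r] by blast
      hence "mm dvd ip k (R r) v + ((\<Sum>j<k. R r j * int (v' j)) - ip k (R r) v)"
        using dvd_red[of "R r"] by (rule dvd_add)
      hence "mm dvd (\<Sum>j<k. R r j * int (v' j))" by simp
      hence "int ?m dvd int (\<Sum>j<k. aug_deg D r j * v' j)" unfolding mm_def R_def by simp
      thus "(\<Sum>j<k. aug_deg D r j * v' j) mod ?m = 0" by (metis int_dvd_int_iff dvd_eq_mod_eq_0)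
    qed
    hence "(\<Prod>j<k. y j ^ v' j) = 1" using hy by blast
    moreover have "(\<Prod>j<k. y j ^ v' j) = g ^ (\<Sum>j<k. e j * v' j)"
      by (simp add: ye power_sum power_mult)
    ultimately have "?m dvd (\<Sum>j<k. e j * v' j)" using gen_order[OF g] by simp
    hence "int ?m dvd int (\<Sum>j<k. e j * v' j)" by (simp only: int_dvd_int_iff)
    moreover have "int (\<Sum>j<k. e j * v' j) = (\<Sum>j<k. e' j * int (v' j))" by (simp add: e'_def)
    ultimately have "mm dvd (\<Sum>j<k. e' j * int (v' j))" unfolding mm_def by simp
    hence "mm dvd (\<Sum>j<k. e' j * int (v' j)) - ((\<Sum>j<k. e' j * int (v' j)) - ip k e' v)"
      using dvd_red[of e'] by (rule dvd_diff)
    thus "mm dvd ip k e' v" by simp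
  qed
  obtain l where l: "l \<in> L" "\<forall>j<k. mm dvd (l j - e' j)"
    using lattice[OF mmpos, of k] clL mdL hypL by blast
  then obtain c z where cz: "\<forall>j. l j = (\<Sum>r\<le>n. c r * R r j) + mm * z j" unfolding L_def by blast
  define t where "t = g ^ nat (c 0 mod mm)"
  define x where "x = (\<lambda>i\<in>{..<n}. g ^ nat (c (Suc i) mod mm))"
  have tx: "(t, x) \<in> PP n" unfolding PP_def t_def x_def using g(1) by auto
  have "phi n k D (t, x) = y"
  proof (rule ext)
    fix j
    show "phi n k D (t, x) j = y j"
    proof (cases "j < k")
      case False
      thus ?thesis using y unfolding phi_def by (auto simp: PiE_def extensional_def)
    next
      case True
      define E where "E = nat (c 0 mod mm) + (\<Sum>i<n. nat (c (Suc i) mod mm) * D j i)"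
      have "phi n k D (t, x) j = t * (\<Prod>i<n. x i ^ D j i)" unfolding phi_def using True by simp
      also have "(\<Prod>i<n. x i ^ D j i) = (\<Prod>i<n. g ^ (nat (c (Suc i) mod mm) * D j i))"
        unfolding x_def by (rule prod.cong) (auto simp: power_mult)
      also have "\<dots> = g ^ (\<Sum>i<n. nat (c (Suc i) mod mm) * D j i)" by (simp add: power_sum)
      also have "t * \<dots> = g ^ E" unfolding t_def E_def by (simp add: power_add)
      also have "\<dots> = g ^ e j"
      proof (rule pow_mod_eq[OF g(1)])
        have "int E = c 0 mod mm + (\<Sum>i<n. (c (Suc i) mod mm) * int (D j i))"
          unfolding E_def using mmpos by simp
        moreover have "l j = c 0 + (\<Sum>i<n. c (Suc i) * int (D j i)) + mm * z j"
          using cz sum_atMost_split0[of "\<lambda>r. c r * R r j" n] by (simp add: R_def aug_deg_def)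
        ultimately have "mm dvd int E - l j"
        proof -
          assume h1: "int E = c 0 mod mm + (\<Sum>i<n. (c (Suc i) mod mm) * int (D j i))"
            and h2: "l j = c 0 + (\<Sum>i<n. c (Suc i) * int (D j i)) + mm * z j"
          have "int E - l j = (c 0 mod mm - c 0) + (\<Sum>i<n. (c (Suc i) mod mm - c (Suc i)) * int (D j i)) - mm * z j"
            unfolding h1 h2 by (simp add: sum_subtractf algebra_simps)
          also have "mm dvd \<dots>"
          proof -
            have md: "mm dvd (a mod mm - a)" for a by (rule mod_eq_dvd_iff[THEN iffD1]) simp
            show ?thesis
              by (rule dvd_diff, rule dvd_add, rule md, rule dvd_sum, rule dvd_mult2, rule md) simp
          qed
          finally show ?thesis .
        qed
        hence "mm dvd (int E - l j) + (l j - e' j)" using l(2) True by (intro dvd_add) auto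
        hence "mm dvd int E - e' j" by simp
        hence "int E mod mm = int (e j) mod mm" unfolding e'_def by (simp add: mod_eq_dvd_iff)
        thus "E mod ?m = e j mod ?m" unfolding mm_def by (metis of_nat_eq_iff zmod_int)
      qed
      also have "\<dots> = y j" using ye True by simp
      finally show ?thesis .
    qed
  qed
  thus ?thesis using tx by blast
qed



definition pmul :: "nat \<Rightarrow> ('a::field \<times> (nat \<Rightarrow> 'a)) \<Rightarrow> ('a \<times> (nat \<Rightarrow> 'a)) \<Rightarrow> ('a \<times> (nat \<Rightarrow> 'a))" where
  "pmul n p p' = (fst p * fst p', \<lambda>i\<in>{..<n}. snd p i * snd p' i)"

definition pdiv :: "nat \<Rightarrow> ('a::field \<times> (nat \<Rightarrow> 'a)) \<Rightarrow> ('a \<times> (nat \<Rightarrow> 'a)) \<Rightarrow> ('a \<times> (nat \<Rightarrow> 'a))" where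
  "pdiv n p p' = (fst p / fst p', \<lambda>i\<in>{..<n}. snd p i / snd p' i)"

lemma phi_j: "j < k \<Longrightarrow> phi n k D p j = fst p * (\<Prod>i<n. snd p i ^ D j i)"
  unfolding phi_def by simp

lemma phi_eq_iff: "phi n k D p = phi n k D p' \<longleftrightarrow> (\<forall>j<k. phi n k D p j = phi n k D p' j)"
  unfolding phi_def by (auto simp: fun_eq_iff)

lemma phi_pmul: "j < k \<Longrightarrow> phi n k D (pmul n p p') j = phi n k D p j * phi n k D p' j"
proof -
  assume j: "j < k"
  have "(\<Prod>i<n. snd (pmul n p p') i ^ D j i) = (\<Prod>i<n. snd p i ^ D j i * snd p' i ^ D j i)"
    unfolding pmul_def by (rule prod.cong) (auto simp: power_mult_distrib)
  hence "phi n k D (pmul n p p') j = fst (pmul n p p') * ((\<Prod>i<n. snd p i ^ D j i) * (\<Prod>i<n. snd p' i ^ D j i))"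
    unfolding phi_j[OF j] by (simp only: prod.distrib)
  also have "\<dots> = phi n k D p j * phi n k D p' j"
    unfolding phi_j[OF j] pmul_def fst_conv by (simp only: mult_ac)
  finally show ?thesis .
qed

lemma phi_pdiv: "j < k \<Longrightarrow> phi n k D (pdiv n p p') j = phi n k D p j / phi n k D p' j"
proof -
  assume j: "j < k"
  have "(\<Prod>i<n. snd (pdiv n p p') i ^ D j i) = (\<Prod>i<n. snd p i ^ D j i / snd p' i ^ D j i)"
    unfolding pdiv_def by (rule prod.cong) (auto simp: power_divide)
  hence "phi n k D (pdiv n p p') j = fst (pdiv n p p') * ((\<Prod>i<n. snd p i ^ D j i) / (\<Prod>i<n. snd p' i ^ D j i))"
    unfolding phi_j[OF j] by (simp only: prod_dividef)
  also have "\<dots> = phi n k D p j / phi n k D p' j"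
    unfolding phi_j[OF j] pdiv_def fst_conv by (simp only: times_divide_times_eq)
  finally show ?thesis .
qed

definition pone :: "nat \<Rightarrow> ('a::field \<times> (nat \<Rightarrow> 'a))" where
  "pone n = (1, \<lambda>i\<in>{..<n}. 1)"

lemma phi_pone: "j < k \<Longrightarrow> phi n k D (pone n) j = 1"
proof -
  assume j: "j < k"
  have "(\<Prod>i<n. snd (pone n) i ^ D j i) = (1::'a)" by (rule prod.neutral) (simp add: pone_def)
  thus ?thesis unfolding phi_j[OF j] by (simp add: pone_def)
qed

lemma phi_nz: "p \<in> PP n \<Longrightarrow> j < k \<Longrightarrow> phi n k D p j \<noteq> 0"
proof -
  assume p: "p \<in> PP n" and j: "j < k"
  have "fst p \<in> UNIV - {0}" "snd p \<in> PiE {..<n} (\<lambda>_. UNIV - {0})" using p unfolding PP_def mem_Times_iff by simp_all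
  hence "fst p \<noteq> 0" "\<forall>i\<in>{..<n}. snd p i \<noteq> 0" by (auto dest: PiE_mem)
  hence "fst p \<noteq> 0" "(\<Prod>i<n. snd p i ^ D j i) \<noteq> 0" by (simp_all add: prod_zero_iff)
  thus ?thesis unfolding phi_j[OF j] by simp
qed

lemma fiber_const:
  fixes y :: "nat \<Rightarrow> 'a::{field,finite}"
  assumes "y \<in> phi n k D ` PP n"
  shows "card {p \<in> PP n. phi n k D p = y} = card {p \<in> PP n. phi n k D p = phi n k D (pone n :: 'a \<times> _)}"
proof -
  obtain p0 :: "'a \<times> (nat \<Rightarrow> 'a)" where p0: "p0 \<in> PP n" "y = phi n k D p0" using assms by blast
  have "bij_betw (\<lambda>p. pmul n p p0) {p \<in> PP n. phi n k D p = phi n k D (pone n)} {p \<in> PP n. phi n k D p = y}"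
  proof (rule bij_betw_byWitness[where f'="\<lambda>p. pdiv n p p0"])
    obtain t0 and x0 :: "nat \<Rightarrow> 'a" where t0: "p0 = (t0, x0)" "t0 \<noteq> 0" "x0 \<in> PiE {..<n} (\<lambda>_. UNIV - {0})"
      using p0(1) unfolding PP_def by auto
    have inv1: "pdiv n (pmul n a p0) p0 = a" if aP: "a \<in> PP n" for a
    proof -
      obtain t and x :: "nat \<Rightarrow> 'a" where tx: "a = (t, x)" "t \<noteq> 0" "x \<in> PiE {..<n} (\<lambda>_. UNIV - {0})"
        using aP unfolding PP_def by auto
      have "(\<lambda>i\<in>{..<n}. (\<lambda>i\<in>{..<n}. x i * x0 i) i / x0 i) = x"
      proof
        fix i show "(\<lambda>i\<in>{..<n}. (\<lambda>i\<in>{..<n}. x i * x0 i) i / x0 i) i = x i"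
          using tx(3) t0(3) by (cases "i < n") (auto simp: PiE_iff extensional_def)
      qed
      thus ?thesis using tx t0 by (simp add: pmul_def pdiv_def)
    qed
    have inv2: "pmul n (pdiv n a p0) p0 = a" if aP: "a \<in> PP n" for a
    proof -
      obtain t and x :: "nat \<Rightarrow> 'a" where tx: "a = (t, x)" "t \<noteq> 0" "x \<in> PiE {..<n} (\<lambda>_. UNIV - {0})"
        using aP unfolding PP_def by auto
      have "(\<lambda>i\<in>{..<n}. (\<lambda>i\<in>{..<n}. x i / x0 i) i * x0 i) = x"
      proof
        fix i show "(\<lambda>i\<in>{..<n}. (\<lambda>i\<in>{..<n}. x i / x0 i) i * x0 i) i = x i"
          using tx(3) t0(3) by (cases "i < n") (auto simp: PiE_iff extensional_def)
      qed
      thus ?thesis using tx t0 by (simp add: pmul_def pdiv_def)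
    qed
    show "\<forall>a\<in>{p \<in> PP n. phi n k D p = phi n k D (pone n)}. pdiv n (pmul n a p0) p0 = a"
      using inv1 by blast
    show "\<forall>a\<in>{p \<in> PP n. phi n k D p = y}. pmul n (pdiv n a p0) p0 = a"
      using inv2 by blast
    have pmulP: "pmul n p p0 \<in> PP n" if pP: "p \<in> PP n" for p
    proof -
      obtain t and x :: "nat \<Rightarrow> 'a" where tx: "p = (t, x)" "t \<noteq> 0" "x \<in> PiE {..<n} (\<lambda>_. UNIV - {0})"
        using pP unfolding PP_def by auto
      have "(\<lambda>i\<in>{..<n}. x i * x0 i) \<in> PiE {..<n} (\<lambda>_. UNIV - {0})"
        using tx(3) t0(3) by (auto simp: PiE_iff)
      thus ?thesis using tx t0 unfolding PP_def pmul_def by simp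
    qed
    have pdivP: "pdiv n p p0 \<in> PP n" if pP: "p \<in> PP n" for p
    proof -
      obtain t and x :: "nat \<Rightarrow> 'a" where tx: "p = (t, x)" "t \<noteq> 0" "x \<in> PiE {..<n} (\<lambda>_. UNIV - {0})"
        using pP unfolding PP_def by auto
      have "(\<lambda>i\<in>{..<n}. x i / x0 i) \<in> PiE {..<n} (\<lambda>_. UNIV - {0})"
        using tx(3) t0(3) by (auto simp: PiE_iff)
      thus ?thesis using tx t0 unfolding PP_def pdiv_def by simp
    qed
    show "(\<lambda>p. pmul n p p0) ` {p \<in> PP n. phi n k D p = phi n k D (pone n)} \<subseteq> {p \<in> PP n. phi n k D p = y}"
    proof (rule image_subsetI)
      fix p :: "'a \<times> (nat \<Rightarrow> 'a)" assume "p \<in> {p \<in> PP n. phi n k D p = phi n k D (pone n)}"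
      hence p: "p \<in> PP n" "phi n k D p = phi n k D (pone n)" by auto
      have "phi n k D (pmul n p p0) = y"
        unfolding p0(2) phi_eq_iff
      proof (intro allI impI)
        fix j assume j: "j < k"
        have "phi n k D p j = phi n k D (pone n) j" using p(2) by simp
        also have "\<dots> = 1" by (rule phi_pone[OF j])
        finally have "phi n k D p j = 1" .
        thus "phi n k D (pmul n p p0) j = phi n k D p0 j" by (simp add: phi_pmul[OF j])
      qed
      thus "pmul n p p0 \<in> {p \<in> PP n. phi n k D p = y}" using pmulP[OF p(1)] by simp
    qed
    show "(\<lambda>p. pdiv n p p0) ` {p \<in> PP n. phi n k D p = y} \<subseteq> {p \<in> PP n. phi n k D p = phi n k D (pone n)}"
    proof (rule image_subsetI)
      fix p :: "'a \<times> (nat \<Rightarrow> 'a)" assume "p \<in> {p \<in> PP n. phi n k D p = y}"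
      hence p: "p \<in> PP n" "phi n k D p = y" by auto
      have "phi n k D (pdiv n p p0) = phi n k D (pone n)"
        unfolding phi_eq_iff
      proof (intro allI impI)
        fix j assume j: "j < k"
        have "phi n k D p j = phi n k D p0 j" using p(2) p0(2) by simp
        thus "phi n k D (pdiv n p p0) j = phi n k D (pone n) j"
          using phi_nz[OF p0(1) j] by (simp add: phi_pdiv[OF j] phi_pone[OF j])
      qed
      thus "pdiv n p p0 \<in> {p \<in> PP n. phi n k D p = phi n k D (pone n)}" using pdivP[OF p(1)] by simp
    qed
  qed
  thus ?thesis by (rule bij_betw_same_card[THEN sym])
qed

lemma duality:
  "phi n k D ` PP n = {y \<in> PiE {..<k} (\<lambda>_. UNIV - {0::'a::{field,finite}}).
      \<forall>v\<in>cong_solutions (card (UNIV::'a set)) n k D. (\<Prod>j<k. y j ^ v j) = 1}"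
proof
  show "phi n k D ` PP n \<subseteq> {y \<in> PiE {..<k} (\<lambda>_. UNIV - {0::'a}).
      \<forall>v\<in>cong_solutions (card (UNIV::'a set)) n k D. (\<Prod>j<k. y j ^ v j) = 1}"
  proof
    fix y :: "nat \<Rightarrow> 'a" assume "y \<in> phi n k D ` PP n"
    then obtain t x where tx: "t \<noteq> 0" "x \<in> PiE {..<n} (\<lambda>_. UNIV - {0::'a})" "y = phi n k D (t, x)"
      unfolding PP_def by blast
    have xi: "x i \<noteq> 0" if "i < n" for i using tx(2) that by (auto simp: PiE_iff)
    have "y \<in> PiE {..<k} (\<lambda>_. UNIV - {0::'a})"
    proof (rule PiE_I)
      fix j assume "j \<in> {..<k}"
      thus "y j \<in> UNIV - {0}" unfolding tx(3) using phi_nz[of "(t, x)" n j k D] tx(1,2) by (simp add: PP_def)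
    next
      fix j assume "j \<notin> {..<k}"
      thus "y j = undefined" unfolding tx(3) phi_def by simp
    qed
    moreover have "\<forall>v\<in>cong_solutions (card (UNIV::'a set)) n k D. (\<Prod>j<k. y j ^ v j) = 1"
      using dual_sub[OF tx(1,2)] tx(3) by blast
    ultimately show "y \<in> {y \<in> PiE {..<k} (\<lambda>_. UNIV - {0::'a}).
      \<forall>v\<in>cong_solutions (card (UNIV::'a set)) n k D. (\<Prod>j<k. y j ^ v j) = 1}" by blast
  qed
next
  show "{y \<in> PiE {..<k} (\<lambda>_. UNIV - {0::'a}).
      \<forall>v\<in>cong_solutions (card (UNIV::'a set)) n k D. (\<Prod>j<k. y j ^ v j) = 1} \<subseteq> phi n k D ` PP n"
  proof (rule subsetI)
    fix y :: "nat \<Rightarrow> 'a"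
    assume "y \<in> {y \<in> PiE {..<k} (\<lambda>_. UNIV - {0::'a}).
      \<forall>v\<in>cong_solutions (card (UNIV::'a set)) n k D. (\<Prod>j<k. y j ^ v j) = 1}"
    hence "y \<in> PiE {..<k} (\<lambda>_. UNIV - {0::'a})"
      "\<forall>v\<in>cong_solutions (card (UNIV::'a set)) n k D. (\<Prod>j<k. y j ^ v j) = 1" by auto
    thus "y \<in> phi n k D ` PP n" by (rule dual_sup)
  qed
qed




lemma finite_PP: "finite (PP n :: ('a::{field,finite} \<times> (nat \<Rightarrow> 'a)) set)"
  unfolding PP_def by (intro finite_cartesian_product finite_PiE) auto

lemma sum_phi:
  assumes "x \<in> PiE {..<n} (\<lambda>_. UNIV - {0::'a::field})"
  shows "(\<Sum>j<k. a j * phi n k D (t, x) j) = t * poly_eval n k a D x"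
proof -
  have "(\<Sum>j<k. a j * phi n k D (t, x) j) = (\<Sum>j<k. t * (a j * (\<Prod>i<n. x i ^ D j i)))"
    by (rule sum.cong) (auto simp: phi_j mult_ac)
  also have "\<dots> = t * poly_eval n k a D x" unfolding poly_eval_def by (simp add: sum_distrib_left)
  finally show ?thesis .
qed

lemma count_D:
  fixes a :: "nat \<Rightarrow> 'a::{field,finite}"
  shows "(card (UNIV::'a set) - 1) * Nstar n k a D =
     card (phi n k D ` PP n \<inter> {y. (\<Sum>j<k. a j * y j) = 0}) * card {p\<in>PP n. phi n k D p = phi n k D (pone n :: 'a \<times> _)}"
proof -
  let ?Z = "{y. (\<Sum>j<k. a j * y j) = 0}"
  have eq: "{p\<in>PP n. phi n k D p \<in> ?Z} = (UNIV - {0::'a}) \<times> {x \<in> PiE {..<n} (\<lambda>_. UNIV - {0}). poly_eval n k a D x = 0}"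
  proof (rule Set.set_eqI)
    fix p :: "'a \<times> (nat \<Rightarrow> 'a)"
    obtain t x where p: "p = (t, x)" by (cases p)
    show "p \<in> {p\<in>PP n. phi n k D p \<in> ?Z} \<longleftrightarrow> p \<in> (UNIV - {0::'a}) \<times> {x \<in> PiE {..<n} (\<lambda>_. UNIV - {0}). poly_eval n k a D x = 0}"
    proof (cases "t \<noteq> 0 \<and> x \<in> PiE {..<n} (\<lambda>_. UNIV - {0})")
      case True
      thus ?thesis unfolding p PP_def using sum_phi[of x n a k D t] by simp
    next
      case False
      thus ?thesis unfolding p PP_def by auto
    qed
  qed
  have "card {p\<in>PP n. phi n k D p \<in> ?Z} = card (phi n k D ` PP n \<inter> ?Z) * card {p\<in>PP n. phi n k D p = phi n k D (pone n :: 'a \<times> _)}"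
    by (rule fiber_count[OF finite_PP fiber_const])
  moreover have "card {p\<in>PP n. phi n k D p \<in> ?Z} = (card (UNIV::'a set) - 1) * Nstar n k a D"
    unfolding eq Nstar_def card_cartesian_product card_Fs ..
  ultimately show ?thesis by simp
qed

lemma count_all:
  "card (PP n :: ('a::{field,finite} \<times> (nat \<Rightarrow> 'a)) set) = card (phi n k D ` (PP n :: ('a \<times> (nat \<Rightarrow> 'a)) set)) * card {p\<in>PP n. phi n k D p = phi n k D (pone n :: 'a \<times> _)}"
proof -
  have "card {p\<in>PP n :: ('a \<times> (nat \<Rightarrow> 'a)) set. phi n k D p \<in> UNIV} = card (phi n k D ` (PP n :: ('a \<times> (nat \<Rightarrow> 'a)) set) \<inter> UNIV) * card {p\<in>PP n. phi n k D p = phi n k D (pone n :: 'a \<times> _)}"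
    by (rule fiber_count[OF finite_PP fiber_const])
  thus ?thesis by simp
qed

theorem mainTheorem6:
  fixes a :: "nat \<Rightarrow> 'a::{field,finite}"
    and D D' :: "nat \<Rightarrow> nat \<Rightarrow> nat"
    and n k :: nat
  assumes "star_equiv n k a D D'"
  shows "Nstar n k a D = Nstar n k a D'"
proof -
  let ?m = "card (UNIV::'a set) - 1"
  have H: "phi n k D ` PP n = (phi n k D' ` PP n :: (nat \<Rightarrow> 'a) set)"
    using assms unfolding star_equiv_def by (simp only: duality)
  have ne: "PP n \<noteq> ({} :: ('a \<times> (nat \<Rightarrow> 'a)) set)"
  proof -
    have "(1, \<lambda>i\<in>{..<n}. 1) \<in> (PP n :: ('a \<times> (nat \<Rightarrow> 'a)) set)" unfolding PP_def by auto
    thus ?thesis by blast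
  qed
  have Hpos: "card (phi n k D ` PP n :: (nat \<Rightarrow> 'a) set) > 0"
    using ne finite_PP[of n, where 'a='a] by (simp add: card_gt_0_iff)
  have "card (phi n k D ` PP n :: (nat \<Rightarrow> 'a) set) * card {p\<in>PP n. phi n k D p = phi n k D (pone n :: 'a \<times> _)}
      = card (phi n k D ` PP n :: (nat \<Rightarrow> 'a) set) * card {p\<in>PP n. phi n k D' p = phi n k D' (pone n :: 'a \<times> _)}"
    using count_all[of n k D, where 'a='a] count_all[of n k D', where 'a='a] unfolding H by linarith
  hence K: "card {p\<in>PP n. phi n k D p = phi n k D (pone n :: 'a \<times> _)} = card {p\<in>PP n. phi n k D' p = phi n k D' (pone n :: 'a \<times> _)}"
    using Hpos by simp
  have "?m * Nstar n k a D = ?m * Nstar n k a D'"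
    using count_D[of n k a D] count_D[of n k a D'] H K by simp
  moreover have "?m > 0" using card_ge2[where 'a='a] by linarith
  ultimately show ?thesis by simp
qed


end
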